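(* In the Jolteon protocol described in the context, for every two globally direct-committed blocks $B,B'$, either $B\longleftarrow^* B'$ or $B'\longleftarrow^* B$.
   Context: Jolteon protocol. There are $n=3f+1$ replicas, at most $f$ Byzantine, the rest honest; reliable authenticated channels; ideal threshold signatures in which $2f+1$ shares on the same message from distinct replicas combine into a threshold signature. A block is $B=(id,qc,tc,r,v,txn)$, with $qc$ a quorum certificate of its parent, $tc$ a timeout certificate or $\bot$, round $r$, view $v=0$, transactions $txn$, and $id$ a collision-resistant hash of the contents. A quorum certificate (QC) for $B$ is a threshold signature on $(B.id,B.r,B.v)$ from $2f+1$ shares (votes); $qc.r=B.r$; $B$ is certified if a QC for it exists; a genesis block of round $0$ has a QC. QCs are compared by round. Notation: $B_i\longleftarrow QC_i\longleftarrow B_{i+1}$ means $QC_i$ certifies $B_i$ and is contained in $B_{i+1}$; $B\longleftarrow^* B'$ ($B'$ extends $B$) means there is such a sequence (possibly of length zero) from $B$ to $B'$. A timeout message for round $r$ is a share on $r$ with the sender's $qc_{high}$; a timeout certificate (TC) for round $r$ is a threshold signature on $r$ from $2f+1$ timeout messages together with their $2f+1$ $qc_{high}$'s (all of round $<r$). Each round $r$ has a leader $L_r$ (round robin). Each replica keeps $r_{vote}=0$, $r_{cur}=1$, $qc_{high}$ = genesis QC. Propose: upon entering round $r$, $L_r$ multicasts $B=(id,qc_{high},tc,r,0,txn)$, with $tc$ the round-$(r-1)$ TC if $L_r$ entered round $r$ by receiving it, else $\bot$. Vote: upon the first valid proposal $B=(id,qc,tc,r,v,txn)$ from $L_r$,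 execute Advance Round, Lock, Commit; then if $r=r_{cur}$, $v=v_{cur}=0$, $r>r_{vote}$, and either $r=qc.r+1$ or ($r=tc.r+1$ and $qc.r\ge\max\{q.r: q$ a $qc_{high}$ in $tc\}$), send a share on $(id,r,v)$ to $L_{r+1}$ and set $r_{vote}\gets r$. Lock: upon seeing a valid QC $qc$ (formed from votes or contained in a proposal, timeout message or TC), set $qc_{high}\gets\max(qc_{high},qc)$. Commit: whenever there are two certified blocks $B,B'$ with $B'.qc$ certifying $B$ and $B'.r=B.r+1$, commit $B$ and all its ancestors. Advance Round: set $r_{cur}\gets\max(r_{cur},r)$ upon receiving or forming a round-$(r-1)$ QC or TC. Timer: upon entering round $r$, send the round-$(r-1)$ TC to $L_r$ if held and reset a timer; on expiry stop voting in round $r_{cur}$ and multicast a timeout message; upon a valid timeout message or TC execute Advance Round, Lock, Commit; upon $2f+1$ timeout messages form a TC. Definition: a block $B$ is globally direct-committed if $f+1$ honest replicas each successfully perform the Vote step on a proposal of a block $B'$ in round $B.r+1$ such that $B'.qc$ certifies $B$ (these Vote calls invoke Lock, setting $qc_{high}\gets B'.qc$, and produce $f+1$ matching votes). *)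

theory Defs
  imports Main
begin

text \<open>Block identifiers are modelled
by the blocks themselves (ideal collision-resistant hash): the QC of a block stores the
certified block. A TC stores its round and the 2f+1 timeout messages (sender, qc_high)
it was formed from.\<close>

datatype 'tx block = Genesis | Block "'tx qc" "'tx tc option" nat nat 'tx
and 'tx qc = QC "'tx block" nat nat
and 'tx tc = TC nat "(nat \<times> 'tx qc) list"

fun bround :: "'tx block \<Rightarrow> nat" where
  "bround Genesis = 0"
| "bround (Block q t r v x) = r"

fun bview :: "'tx block \<Rightarrow> nat" where
  "bview Genesis = 0"
| "bview (Block q t r v x) = v"

fun qc_blk :: "'tx qc \<Rightarrow> 'tx block" where
  "qc_blk (QC b r v) = b"

fun qc_r :: "'tx qc \<Rightarrow> nat" where
  "qc_r (QC b r v) = r"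

fun tc_r :: "'tx tc \<Rightarrow> nat" where
  "tc_r (TC r l) = r"

fun tc_qcs :: "'tx tc \<Rightarrow> (nat \<times> 'tx qc) list" where
  "tc_qcs (TC r l) = l"

definition genesis_qc :: "'tx qc" where
  "genesis_qc = QC Genesis 0 0"

definition nrep :: "nat \<Rightarrow> nat" where
  "nrep f = 3 * f + 1"

definition leader :: "nat \<Rightarrow> nat \<Rightarrow> nat" where
  "leader f r = r mod nrep f"

text \<open>The global state records the
messages sent by honest replicas: proposals (sent by the leader of the block's round),
vote shares (replica, block id, round, view) and timeout messages (replica, round, qc_high).\<close>

record 'tx lst =
  rvote :: nat
  rcur :: nat
  qchigh :: "'tx qc"
  seen :: "nat set"      (* rounds in which a valid proposal has already been processed *)
  touted :: "nat set"    (* rounds whose timer expired (no more voting there) *)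

record 'tx gst =
  loc :: "nat \<Rightarrow> 'tx lst"
  props :: "'tx block set"
  votes :: "(nat \<times> 'tx block \<times> nat \<times> nat) set"
  touts :: "(nat \<times> nat \<times> 'tx qc) set"

text \<open>Ideal threshold signatures: Byzantine replicas (set F) can produce shares on anything;
honest shares exist only if sent.\<close>

definition valid_qc :: "nat \<Rightarrow> nat set \<Rightarrow> ('tx,'z) gst_scheme \<Rightarrow> 'tx qc \<Rightarrow> bool" where
  "valid_qc f F s q = (case q of QC b r v \<Rightarrow>
      r = bround b \<and> v = bview b \<and>
      (b = Genesis \<or> 2 * f + 1 \<le> card {j. j < nrep f \<and> (j \<in> F \<or> (j, b, r, v) \<in> votes s)}))"

definition valid_tc :: "nat \<Rightarrow> nat set \<Rightarrow> ('tx,'z) gst_scheme \<Rightarrow> 'tx tc \<Rightarrow> bool" where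
  "valid_tc f F s t = (case t of TC r l \<Rightarrow>
      length l = 2 * f + 1 \<and> distinct (map fst l) \<and>
      (\<forall>(j, q) \<in> set l. j < nrep f \<and> (j \<in> F \<or> (j, r, q) \<in> touts s)
                       \<and> valid_qc f F s q \<and> qc_r q < r))"

definition valid_block :: "nat \<Rightarrow> nat set \<Rightarrow> ('tx,'z) gst_scheme \<Rightarrow> 'tx block \<Rightarrow> bool" where
  "valid_block f F s B = (case B of Genesis \<Rightarrow> False
     | Block q tco r v x \<Rightarrow> valid_qc f F s q \<and> (\<forall>t. tco = Some t \<longrightarrow> valid_tc f F s t))"

definition lockq :: "'tx qc \<Rightarrow> 'tx qc \<Rightarrow> 'tx qc" where
  "lockq q qh = (if qc_r qh < qc_r q then q else qh)"

definition observe :: "'tx qc list \<Rightarrow> nat \<Rightarrow> ('tx,'z) lst_scheme \<Rightarrow> ('tx,'z) lst_scheme" where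
  "observe qs rb ls = ls\<lparr>rcur := max (rcur ls) rb, qchigh := fold lockq qs (qchigh ls)\<rparr>"

definition tco_qcs :: "'tx tc option \<Rightarrow> 'tx qc list" where
  "tco_qcs tco = (case tco of None \<Rightarrow> [] | Some t \<Rightarrow> map snd (tc_qcs t))"

definition tco_bound :: "'tx tc option \<Rightarrow> nat" where
  "tco_bound tco = (case tco of None \<Rightarrow> 0 | Some t \<Rightarrow> tc_r t + 1)"

text \<open>Propose: if replica i entered a new round (rcur grew from ls to ls') and is its leader,
it multicasts a new block with its qc_high and the round-(r-1) TC by which it entered, if any.\<close>

definition enter_props :: "nat \<Rightarrow> nat \<Rightarrow> 'tx lst \<Rightarrow> 'tx lst \<Rightarrow> 'tx tc option \<Rightarrow> 'tx
    \<Rightarrow> 'tx block set \<Rightarrow> 'tx block set" where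
  "enter_props f i ls ls' tco x P =
     (if rcur ls < rcur ls' \<and> i = leader f (rcur ls')
      then insert (Block (qchigh ls')
                     (case tco of None \<Rightarrow> None
                        | Some t \<Rightarrow> if tc_r t + 1 = rcur ls' then Some t else None)
                     (rcur ls') 0 x) P
      else P)"

definition vote_ok :: "'tx lst \<Rightarrow> 'tx block \<Rightarrow> bool" where
  "vote_ok ls B = (case B of Genesis \<Rightarrow> False
     | Block q tco r v x \<Rightarrow>
         r = rcur ls \<and> v = 0 \<and> rvote ls < r \<and> r \<notin> touted ls \<and>
         (r = qc_r q + 1 \<or>
          (\<exists>t. tco = Some t \<and> r = tc_r t + 1 \<and>
               Max (set (map (qc_r \<circ> snd) (tc_qcs t))) \<le> qc_r q)))"

definition lst0 :: "'tx lst" where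
  "lst0 = \<lparr>rvote = 0, rcur = 1, qchigh = genesis_qc, seen = {}, touted = {}\<rparr>"

definition init :: "nat \<Rightarrow> nat set \<Rightarrow> 'tx gst \<Rightarrow> bool" where
  "init f F s \<longleftrightarrow> loc s = (\<lambda>i. lst0) \<and> votes s = {} \<and> touts s = {} \<and>
     (\<exists>x. props s = (if leader f 1 \<in> F then {} else {Block genesis_qc None 1 0 x}))"

text \<open>Steps of honest replicas i (i < n, i not in F). Byzantine replicas are modelled by the
validity predicates: they can send any message whose certificates are valid.\<close>

inductive step :: "nat \<Rightarrow> nat set \<Rightarrow> 'tx gst \<Rightarrow> 'tx gst \<Rightarrow> bool" for f F where
  recv_proposal:
  "\<lbrakk> i < nrep f; i \<notin> F; B = Block q tco r v x; r \<notin> seen (loc s i);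
     leader f r \<in> F \<or> B \<in> props s; valid_block f F s B;
     ls = loc s i;
     ls1 = (observe (q # tco_qcs tco) (max (qc_r q + 1) (tco_bound tco)) ls)\<lparr>seen := insert r (seen ls)\<rparr>;
     ok = vote_ok ls1 B;
     s' = s\<lparr>loc := (loc s)(i := (if ok then ls1\<lparr>rvote := r\<rparr> else ls1)),
            votes := (if ok then insert (i, B, r, 0) (votes s) else votes s),
            props := enter_props f i ls ls1 tco y (props s)\<rparr> \<rbrakk>
   \<Longrightarrow> step f F s s'"
| recv_timeout:
  "\<lbrakk> i < nrep f; i \<notin> F;
     (j \<in> F \<and> j < nrep f \<and> valid_qc f F s q \<and> qc_r q < r) \<or> (j, r, q) \<in> touts s;
     ls = loc s i; ls1 = observe [q] (qc_r q + 1) ls;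
     s' = s\<lparr>loc := (loc s)(i := ls1), props := enter_props f i ls ls1 None y (props s)\<rparr> \<rbrakk>
   \<Longrightarrow> step f F s s'"
| get_tc:
  "\<lbrakk> i < nrep f; i \<notin> F; valid_tc f F s t;
     ls = loc s i; ls1 = observe (map snd (tc_qcs t)) (tc_r t + 1) ls;
     s' = s\<lparr>loc := (loc s)(i := ls1), props := enter_props f i ls ls1 (Some t) y (props s)\<rparr> \<rbrakk>
   \<Longrightarrow> step f F s s'"
| form_qc:
  "\<lbrakk> i < nrep f; i \<notin> F; valid_qc f F s q; i = leader f (qc_r q + 1);
     ls = loc s i; ls1 = observe [q] (qc_r q + 1) ls;
     s' = s\<lparr>loc := (loc s)(i := ls1), props := enter_props f i ls ls1 None y (props s)\<rparr> \<rbrakk>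
   \<Longrightarrow> step f F s s'"
| timer_expiry:
  "\<lbrakk> i < nrep f; i \<notin> F; ls = loc s i; rcur ls \<notin> touted ls;
     s' = s\<lparr>loc := (loc s)(i := ls\<lparr>touted := insert (rcur ls) (touted ls)\<rparr>),
            touts := insert (i, rcur ls, qchigh ls) (touts s)\<rparr> \<rbrakk>
   \<Longrightarrow> step f F s s'"

inductive reachable :: "nat \<Rightarrow> nat set \<Rightarrow> 'tx gst \<Rightarrow> bool" for f F where
  "init f F s \<Longrightarrow> reachable f F s"
| "reachable f F s \<Longrightarrow> step f F s s' \<Longrightarrow> reachable f F s'"

definition certifies :: "nat \<Rightarrow> nat set \<Rightarrow> 'tx gst \<Rightarrow> 'tx qc \<Rightarrow> 'tx block \<Rightarrow> bool" where
  "certifies f F s q B \<longleftrightarrow> valid_qc f F s q \<and> qc_blk q = B"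

inductive extends :: "nat \<Rightarrow> nat set \<Rightarrow> 'tx gst \<Rightarrow> 'tx block \<Rightarrow> 'tx block \<Rightarrow> bool"
  for f F s where
  ext_refl: "extends f F s B B"
| ext_step: "\<lbrakk> extends f F s B B''; B' = Block q tco r v x; certifies f F s q B'' \<rbrakk>
             \<Longrightarrow> extends f F s B B'"

definition globally_direct_committed :: "nat \<Rightarrow> nat set \<Rightarrow> 'tx gst \<Rightarrow> 'tx block \<Rightarrow> bool" where
  "globally_direct_committed f F s B \<longleftrightarrow>
     (\<exists>B' q tco x. B' = Block q tco (bround B + 1) 0 x \<and> certifies f F s q B \<and>
        f + 1 \<le> card {i. i < nrep f \<and> i \<notin> F \<and> (i, B', bround B + 1, 0) \<in> votes s})"

end

theory Submission
  imports Defs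
begin


lemma fold_lockq_ge: "qc_r qh \<le> qc_r (fold lockq qs qh)"
proof (induction qs arbitrary: qh)
  case (Cons a qs)
  have "qc_r qh \<le> qc_r (lockq a qh)" by (simp add: lockq_def)
  then show ?case using Cons[of "lockq a qh"] by simp
qed simp

lemma fold_lockq_mem: "q \<in> set qs \<Longrightarrow> qc_r q \<le> qc_r (fold lockq qs qh)"
proof (induction qs arbitrary: qh)
  case Nil then show ?case by simp
next
  case (Cons a qs)
  have "qc_r a \<le> qc_r (lockq a qh)" by (simp add: lockq_def)
  then show ?case using Cons fold_lockq_ge[of "lockq a qh" qs]
    by (auto simp del: fold_simps)
qed

lemma observe_qch: "qc_r (qchigh ls) \<le> qc_r (qchigh (observe qs rb ls))"
  by (simp add: observe_def fold_lockq_ge)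

lemma observe_simps[simp]:
  "rvote (observe qs rb ls) = rvote ls"
  "rcur (observe qs rb ls) = max (rcur ls) rb"
  "seen (observe qs rb ls) = seen ls"
  "touted (observe qs rb ls) = touted ls"
  by (simp_all add: observe_def)

lemma observe_qchigh: "qchigh (observe qs rb ls) = fold lockq qs (qchigh ls)"
  by (simp add: observe_def)

lemma valid_qc_mono:
  assumes "valid_qc f F s q" "votes s \<subseteq> votes s'"
  shows "valid_qc f F s' q"
proof (cases q)
  case (QC b r v)
  have "card {j. j < nrep f \<and> (j \<in> F \<or> (j, b, r, v) \<in> votes s)}
      \<le> card {j. j < nrep f \<and> (j \<in> F \<or> (j, b, r, v) \<in> votes s')}"
    by (rule card_mono) (use assms(2) in auto)
  then show ?thesis using assms QC by (auto simp: valid_qc_def)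
qed

lemma valid_tc_mono:
  assumes "valid_tc f F s t" "votes s \<subseteq> votes s'" "touts s \<subseteq> touts s'"
  shows "valid_tc f F s' t"
  using assms valid_qc_mono[OF _ assms(2)]
  by (cases t) (fastforce simp: valid_tc_def)

lemma valid_block_mono:
  assumes "valid_block f F s B" "votes s \<subseteq> votes s'" "touts s \<subseteq> touts s'"
  shows "valid_block f F s' B"
  using assms valid_qc_mono[OF _ assms(2)] valid_tc_mono[OF _ assms(2,3)]
  by (cases B) (auto simp: valid_block_def)

lemma step_mono:
  assumes "step f F s s'"
  shows "votes s \<subseteq> votes s' \<and> touts s \<subseteq> touts s' \<and>
    rvote (loc s i) \<le> rvote (loc s' i) \<and> rcur (loc s i) \<le> rcur (loc s' i) \<and>
    qc_r (qchigh (loc s i)) \<le> qc_r (qchigh (loc s' i)) \<and> touted (loc s i) \<subseteq> touted (loc s' i)"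
  using assms
proof cases
  case (recv_proposal i' B q tco r v x ls ls1 ok y)
  have a: "rvote (loc s i) \<le> rvote (loc s' i)"
    using recv_proposal by (auto simp: vote_ok_def split: block.splits)
  have b: "qc_r (qchigh (loc s i)) \<le> qc_r (qchigh (loc s' i))"
    using recv_proposal observe_qch by auto
  show ?thesis using recv_proposal a b by auto
qed (auto intro: observe_qch)


definition vcond :: "nat \<Rightarrow> 'tx qc \<Rightarrow> 'tx tc option \<Rightarrow> bool" where
  "vcond r q tco \<longleftrightarrow> (r = qc_r q + 1 \<or>
     (\<exists>t. tco = Some t \<and> r = tc_r t + 1 \<and> Max (set (map (qc_r \<circ> snd) (tc_qcs t))) \<le> qc_r q))"

definition vrec :: "nat \<Rightarrow> nat set \<Rightarrow> 'tx gst \<Rightarrow> nat \<Rightarrow> 'tx block \<Rightarrow> nat \<Rightarrow> nat \<Rightarrow> bool" where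
  "vrec f F s i B r v \<longleftrightarrow> i < nrep f \<and> i \<notin> F \<and> v = 0 \<and> r \<le> rvote (loc s i) \<and>
     (\<exists>q tco x. B = Block q tco r 0 x \<and> valid_block f F s B \<and> qc_r q < r \<and>
        qc_r q \<le> qc_r (qchigh (loc s i)) \<and> vcond r q tco)"

lemma vrec_mono:
  assumes "vrec f F s i B r v" "step f F s s'"
  shows "vrec f F s' i B r v"
proof -
  have m: "votes s \<subseteq> votes s' \<and> touts s \<subseteq> touts s' \<and>
    rvote (loc s i) \<le> rvote (loc s' i) \<and>
    qc_r (qchigh (loc s i)) \<le> qc_r (qchigh (loc s' i))"
    using step_mono[OF assms(2)] by blast
  from assms(1) obtain q tco x where h: "i < nrep f" "i \<notin> F" "v = 0" "r \<le> rvote (loc s i)"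
     "B = Block q tco r 0 x" "valid_block f F s B" "qc_r q < r"
     "qc_r q \<le> qc_r (qchigh (loc s i))" "vcond r q tco" unfolding vrec_def by blast
  have "valid_block f F s' B" using h(6) m valid_block_mono by blast
  then show ?thesis unfolding vrec_def using h m by (blast intro: le_trans)
qed

definition jinv :: "nat \<Rightarrow> nat set \<Rightarrow> 'tx gst \<Rightarrow> bool" where
  "jinv f F s \<longleftrightarrow>
    (\<forall>i B r v. (i, B, r, v) \<in> votes s \<longrightarrow> vrec f F s i B r v) \<and>
    (\<forall>i B1 B2 r v1 v2. (i, B1, r, v1) \<in> votes s \<longrightarrow> (i, B2, r, v2) \<in> votes s \<longrightarrow> B1 = B2) \<and>
    (\<forall>i r2 qh. (i, r2, qh) \<in> touts s \<longrightarrow> r2 \<in> touted (loc s i) \<and> r2 \<le> rcur (loc s i)) \<and>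
    (\<forall>i B1 r1 v q tco x r2 qh. (i, B1, r1, v) \<in> votes s \<longrightarrow> B1 = Block q tco r1 v x \<longrightarrow>
        (i, r2, qh) \<in> touts s \<longrightarrow> r1 \<le> r2 \<longrightarrow> qc_r q \<le> qc_r qh)"

lemma jinv_init: "init f F s \<Longrightarrow> jinv f F s"
  by (simp add: init_def jinv_def)

lemma jinv_step:
  assumes inv: "jinv f F s" and st: "step f F s s'"
  shows "jinv f F s'"
proof -
  have I1: "\<And>i B r v. (i, B, r, v) \<in> votes s \<Longrightarrow> vrec f F s i B r v"
    using inv unfolding jinv_def by auto
  have I2: "\<And>i B1 B2 r v1 v2. (i, B1, r, v1) \<in> votes s \<Longrightarrow> (i, B2, r, v2) \<in> votes s \<Longrightarrow> B1 = B2"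
    using inv unfolding jinv_def by blast
  have I3: "\<And>i r2 qh. (i, r2, qh) \<in> touts s \<Longrightarrow> r2 \<in> touted (loc s i) \<and> r2 \<le> rcur (loc s i)"
    using inv unfolding jinv_def by blast
  have I4: "\<And>i B1 r1 v q tco x r2 qh. (i, B1, r1, v) \<in> votes s \<Longrightarrow> B1 = Block q tco r1 v x \<Longrightarrow>
        (i, r2, qh) \<in> touts s \<Longrightarrow> r1 \<le> r2 \<Longrightarrow> qc_r q \<le> qc_r qh"
    using inv unfolding jinv_def by blast
  have M: "\<And>i. rcur (loc s i) \<le> rcur (loc s' i) \<and> touted (loc s i) \<subseteq> touted (loc s' i)"
    using step_mono[OF st] by blast
  have I1o: "\<And>i B r v. (i, B, r, v) \<in> votes s \<Longrightarrow> vrec f F s' i B r v"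
    using I1 vrec_mono[OF _ st] by blast
  have same: "jinv f F s'" if "votes s' = votes s" "touts s' = touts s"
  proof -
    have P1: "\<forall>i' B' r' v'. (i', B', r', v') \<in> votes s' \<longrightarrow> vrec f F s' i' B' r' v'"
      unfolding that using I1o by auto
    have P2: "\<forall>i' B1 B2 r' v1 v2. (i', B1, r', v1) \<in> votes s' \<longrightarrow> (i', B2, r', v2) \<in> votes s' \<longrightarrow> B1 = B2"
      unfolding that using I2 by blast
    have P3: "\<forall>i' r2 qh. (i', r2, qh) \<in> touts s' \<longrightarrow> r2 \<in> touted (loc s' i') \<and> r2 \<le> rcur (loc s' i')"
      unfolding that using I3 M by (meson le_trans subsetD)
    have P4: "\<forall>i' B1 r1 v' q' tco' x' r2 qh. (i', B1, r1, v') \<in> votes s' \<longrightarrow> B1 = Block q' tco' r1 v' x' \<longrightarrow>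
      (i', r2, qh) \<in> touts s' \<longrightarrow> r1 \<le> r2 \<longrightarrow> qc_r q' \<le> qc_r qh"
      unfolding that using I4 by blast
    show ?thesis unfolding jinv_def using P1 P2 P3 P4 by blast
  qed
  have I3o: "\<And>i r2 qh. (i, r2, qh) \<in> touts s \<Longrightarrow> r2 \<in> touted (loc s' i) \<and> r2 \<le> rcur (loc s' i)"
    using I3 M by (meson le_trans subsetD)
  from st show ?thesis
  proof cases
    case (recv_proposal i B q tco r v x ls ls1 ok y)
    note R = recv_proposal
    have mono: "votes s \<subseteq> votes s'" "touts s \<subseteq> touts s'" using step_mono[OF st] by blast+
    have ts: "touts s' = touts s" using R(10) by simp
    have qf: "qc_r q \<le> qc_r (fold lockq (q # tco_qcs tco) (qchigh ls))"
      by (rule fold_lockq_mem) simp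
    have qe: "qchigh ls1 = fold lockq (q # tco_qcs tco) (qchigh ls)"
      using R(8) by (simp add: observe_qchigh del: fold_simps)
    have l1: "rvote ls1 = rvote ls" "rcur ls \<le> rcur ls1" "touted ls1 = touted ls"
      "qc_r q \<le> qc_r (qchigh ls1)" "qc_r q < rcur ls1"
      using R(8) qf qe by auto
    show ?thesis
    proof (cases ok)
      case False
      then have vs: "votes s' = votes s" using R(10) by simp
      show ?thesis unfolding jinv_def vs ts using I1o I2 I3o I4 by blast
    next
      case True
      then have vo: "vote_ok ls1 B" using R(9) by simp
      then have vo': "r = rcur ls1" "v = 0" "rvote ls < r" "r \<notin> touted ls" "vcond r q tco"
        using R(3) l1 by (auto simp: vote_ok_def vcond_def)
      have vs: "votes s' = insert (i, B, r, 0) (votes s)" using R(10) True by simp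
      have li: "loc s' i = ls1\<lparr>rvote := r\<rparr>" using R(10) True by simp
      have vb: "valid_block f F s' B" using R(6) valid_block_mono mono by blast
      have new1: "vrec f F s' i B r 0"
        unfolding vrec_def using li R(1,2,3) vo' l1 vb by simp
      have new2: "False" if "(i, B2, r, v2) \<in> votes s" for B2 v2
        using I1[OF that] vo'(3) R(7) unfolding vrec_def by auto
      have new4: "False" if "(i, r2, qh) \<in> touts s" "r \<le> r2" for r2 qh
      proof -
        have a: "r2 \<in> touted ls" "r2 \<le> rcur ls" using I3[OF that(1)] R(7) by auto
        have "r2 = r" using a(2) that(2) vo'(1) l1(2) by linarith
        then show False using a(1) vo'(4) by simp
      qed
      have P1: "\<forall>i' B' r' v'. (i', B', r', v') \<in> votes s' \<longrightarrow> vrec f F s' i' B' r' v'"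
        unfolding vs using I1o new1 by auto
      have P2: "\<forall>i' B1 B2 r' v1 v2. (i', B1, r', v1) \<in> votes s' \<longrightarrow> (i', B2, r', v2) \<in> votes s' \<longrightarrow> B1 = B2"
        unfolding vs using I2 new2 by blast
      have P3: "\<forall>i' r2 qh. (i', r2, qh) \<in> touts s' \<longrightarrow> r2 \<in> touted (loc s' i') \<and> r2 \<le> rcur (loc s' i')"
        unfolding ts using I3o by blast
      have P4: "\<forall>i' B1 r1 v' q' tco' x' r2 qh. (i', B1, r1, v') \<in> votes s' \<longrightarrow> B1 = Block q' tco' r1 v' x' \<longrightarrow>
        (i', r2, qh) \<in> touts s' \<longrightarrow> r1 \<le> r2 \<longrightarrow> qc_r q' \<le> qc_r qh"
        unfolding vs ts using I4 new4 by blast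
      show ?thesis unfolding jinv_def using P1 P2 P3 P4 by blast
    qed
  next
    case (timer_expiry i ls)
    have vs: "votes s' = votes s" using timer_expiry(5) by simp
    have ts: "touts s' = insert (i, rcur ls, qchigh ls) (touts s)" using timer_expiry(5) by simp
    have li: "loc s' i = ls\<lparr>touted := insert (rcur ls) (touted ls)\<rparr>" using timer_expiry(5) by simp
    have new3: "rcur ls \<in> touted (loc s' i) \<and> rcur ls \<le> rcur (loc s' i)" using li by simp
    have new4: "qc_r q \<le> qc_r (qchigh ls)" if "(i, B1, r1, v) \<in> votes s" "B1 = Block q tco r1 v x" for B1 r1 v q tco x
      using I1[OF that(1)] that(2) timer_expiry(3) unfolding vrec_def by auto
    have P1: "\<forall>i' B' r' v'. (i', B', r', v') \<in> votes s' \<longrightarrow> vrec f F s' i' B' r' v'"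
      unfolding vs using I1o by auto
    have P2: "\<forall>i' B1 B2 r' v1 v2. (i', B1, r', v1) \<in> votes s' \<longrightarrow> (i', B2, r', v2) \<in> votes s' \<longrightarrow> B1 = B2"
      unfolding vs using I2 by blast
    have P3: "\<forall>i' r2 qh. (i', r2, qh) \<in> touts s' \<longrightarrow> r2 \<in> touted (loc s' i') \<and> r2 \<le> rcur (loc s' i')"
      unfolding ts using I3o new3 by blast
    have P4: "\<forall>i' B1 r1 v' q' tco' x' r2 qh. (i', B1, r1, v') \<in> votes s' \<longrightarrow> B1 = Block q' tco' r1 v' x' \<longrightarrow>
      (i', r2, qh) \<in> touts s' \<longrightarrow> r1 \<le> r2 \<longrightarrow> qc_r q' \<le> qc_r qh"
      unfolding vs ts using I4 new4 by blast
    show ?thesis unfolding jinv_def using P1 P2 P3 P4 by blast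
  next
    case (recv_timeout i j q r ls ls1 y)
    then have "votes s' = votes s" "touts s' = touts s" by simp_all
    then show ?thesis by (rule same)
  next
    case (get_tc i t ls ls1 y)
    then have "votes s' = votes s" "touts s' = touts s" by simp_all
    then show ?thesis by (rule same)
  next
    case (form_qc i q ls ls1 y)
    then have "votes s' = votes s" "touts s' = touts s" by simp_all
    then show ?thesis by (rule same)
  qed
qed

lemma reachable_jinv: "reachable f F s \<Longrightarrow> jinv f F s"
  by (induction rule: reachable.induct) (auto intro: jinv_init jinv_step)



lemma honest_quorum:
  assumes "F \<subseteq> {..<nrep f}" "card F \<le> f"
    and "2 * f + 1 \<le> card {j. j < nrep f \<and> (j \<in> F \<or> P j)}"
  shows "2 * f + 1 \<le> card {j. j < nrep f \<and> j \<notin> F \<and> P j} + card F"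
proof -
  have fin: "finite F" using assms(1) finite_subset by blast
  have "{j. j < nrep f \<and> (j \<in> F \<or> P j)} \<subseteq> {j. j < nrep f \<and> j \<notin> F \<and> P j} \<union> F" by blast
  then have "card {j. j < nrep f \<and> (j \<in> F \<or> P j)} \<le> card ({j. j < nrep f \<and> j \<notin> F \<and> P j} \<union> F)"
    by (intro card_mono) (use fin in auto)
  also have "\<dots> \<le> card {j. j < nrep f \<and> j \<notin> F \<and> P j} + card F" by (rule card_Un_le)
  finally show ?thesis using assms(3) by linarith
qed

lemma quorum_inter:
  assumes "F \<subseteq> {..<nrep f}" "card F \<le> f"
    and "2 * f + 1 \<le> card {j. j < nrep f \<and> (j \<in> F \<or> P j)}"
    and "f + 1 \<le> card {j. j < nrep f \<and> j \<notin> F \<and> Q j}"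
  shows "\<exists>j. j < nrep f \<and> j \<notin> F \<and> P j \<and> Q j"
proof (rule ccontr)
  assume na: "\<not> ?thesis"
  let ?A = "{j. j < nrep f \<and> j \<notin> F \<and> P j}"
  let ?H = "{j. j < nrep f \<and> j \<notin> F \<and> Q j}"
  have a: "2 * f + 1 \<le> card ?A + card F" using honest_quorum[OF assms(1,2,3)] .
  have dis: "?A \<inter> ?H = {}" using na by blast
  have fin: "finite ?A" "finite ?H" by auto
  have "card ?A + card ?H = card (?A \<union> ?H)" using card_Un_disjoint[OF fin dis] by simp
  also have "\<dots> \<le> card ({..<nrep f} - F)" by (intro card_mono) auto
  also have "\<dots> = nrep f - card F" using assms(1) by (simp add: card_Diff_subset finite_subset)
  finally show False using a assms(2,4) by (simp add: nrep_def)
qed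

context
  fixes f :: nat and F :: "nat set" and s :: "'tx gst"
  assumes FF: "F \<subseteq> {..<nrep f}" and cF: "card F \<le> f" and J: "jinv f F s"
begin

lemma votes_vrec: "(i, B, r, v) \<in> votes s \<Longrightarrow> vrec f F s i B r v"
  using J unfolding jinv_def by auto

lemma votes_uniq: "(i, B1, r, v1) \<in> votes s \<Longrightarrow> (i, B2, r, v2) \<in> votes s \<Longrightarrow> B1 = B2"
  using J unfolding jinv_def by blast

lemma votes_touts: "(i, B1, r1, v) \<in> votes s \<Longrightarrow> B1 = Block q tco r1 v x \<Longrightarrow>
        (i, r2, qh) \<in> touts s \<Longrightarrow> r1 \<le> r2 \<Longrightarrow> qc_r q \<le> qc_r qh"
  using J unfolding jinv_def by blast

lemma qc_nongen:
  assumes "valid_qc f F s (QC b r v)" "b \<noteq> Genesis"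
  shows "2 * f + 1 \<le> card {j. j < nrep f \<and> (j \<in> F \<or> (j, b, r, v) \<in> votes s)}"
    and "r = bround b" "v = bview b"
  using assms by (auto simp: valid_qc_def)

lemma qc_round_pos:
  assumes "valid_qc f F s (QC b r v)" "b \<noteq> Genesis"
  shows "0 < r"
proof -
  have "2 * f + 1 \<le> card {j. j < nrep f \<and> j \<notin> F \<and> (j, b, r, v) \<in> votes s} + card F"
    using honest_quorum[OF FF cF qc_nongen(1)[OF assms]] .
  then have "0 < card {j. j < nrep f \<and> j \<notin> F \<and> (j, b, r, v) \<in> votes s}" using cF by linarith
  then have "{j. j < nrep f \<and> j \<notin> F \<and> (j, b, r, v) \<in> votes s} \<noteq> {}" by (metis card.empty less_irrefl)
  then obtain j where "(j, b, r, v) \<in> votes s" by blast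
  then show ?thesis using votes_vrec unfolding vrec_def by fastforce
qed

lemma qc_unique:
  assumes "valid_qc f F s q1" "valid_qc f F s q2" "qc_r q1 = qc_r q2"
  shows "qc_blk q1 = qc_blk q2"
proof -
  obtain b1 r1 v1 where q1: "q1 = QC b1 r1 v1" by (cases q1)
  obtain b2 r2 v2 where q2: "q2 = QC b2 r2 v2" by (cases q2)
  have rr: "r1 = r2" using assms(3) q1 q2 by simp
  show ?thesis
  proof (cases "b1 = Genesis")
    case True
    then have "r1 = 0" using assms(1) q1 by (simp add: valid_qc_def)
    then have "b2 = Genesis" using qc_round_pos[of b2 r2 v2] assms(2) q2 rr by auto
    then show ?thesis using True q1 q2 by simp
  next
    case False
    have r1: "0 < r1" using qc_round_pos[of b1 r1 v1] assms(1) q1 False by auto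
    have b2: "b2 \<noteq> Genesis"
    proof
      assume "b2 = Genesis"
      then have "r2 = 0" using assms(2) q2 by (simp add: valid_qc_def)
      then show False using r1 rr by simp
    qed
    have h2: "2 * f + 1 \<le> card {j. j < nrep f \<and> j \<notin> F \<and> (j, b2, r2, v2) \<in> votes s} + card F"
      using honest_quorum[OF FF cF qc_nongen(1)] assms(2) q2 b2 by blast
    then have h2': "f + 1 \<le> card {j. j < nrep f \<and> j \<notin> F \<and> (j, b2, r2, v2) \<in> votes s}"
      using cF by linarith
    obtain j where "(j, b1, r1, v1) \<in> votes s" "(j, b2, r2, v2) \<in> votes s"
      using quorum_inter[OF FF cF qc_nongen(1) h2'] assms(1) q1 False by blast
    then show ?thesis using votes_uniq rr q1 q2 by simp
  qed
qed

lemma valid_qc_round: "valid_qc f F s q \<Longrightarrow> qc_r q = bround (qc_blk q)"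
  by (cases q) (simp add: valid_qc_def)

lemma main_ext:
  assumes gdc: "globally_direct_committed f F s B"
  shows "certifies f F s qc C \<Longrightarrow> bround B \<le> bround C \<Longrightarrow> extends f F s B C"
proof -
  define r where "r = bround B"
  obtain B' q0 tco0 x0 where B': "B' = Block q0 tco0 (r + 1) 0 x0" and c0: "certifies f F s q0 B"
    and hv: "f + 1 \<le> card {i. i < nrep f \<and> i \<notin> F \<and> (i, B', r + 1, 0) \<in> votes s}"
    using gdc unfolding globally_direct_committed_def r_def by blast
  have q0r: "qc_r q0 = r" using c0 valid_qc_round unfolding certifies_def r_def by auto
  have "\<forall>C qc. bround C = m \<longrightarrow> certifies f F s qc C \<longrightarrow> r \<le> m \<longrightarrow> extends f F s B C" for m
  proof (induction m rule: less_induct)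
    case (less m)
    show ?case
    proof (intro allI impI)
      fix C qc
      assume Cm: "bround C = m" and cC: "certifies f F s qc C" and rm: "r \<le> m"
      have vqc: "valid_qc f F s qc" and qcb: "qc_blk qc = C" using cC unfolding certifies_def by auto
      have qcr: "qc_r qc = m" using valid_qc_round[OF vqc] qcb Cm by simp
      show "extends f F s B C"
      proof (cases "m = r")
        case True
        have "qc_blk q0 = qc_blk qc"
          using qc_unique[of q0 qc] c0 vqc q0r qcr True unfolding certifies_def by auto
        then have "C = B" using c0 qcb unfolding certifies_def by simp
        then show ?thesis by (simp add: ext_refl)
      next
        case False
        then have mr: "r < m" using rm by simp
        have CG: "C \<noteq> Genesis" using mr Cm by auto
        obtain vc where qcd: "qc = QC C m vc" using qcb qcr by (cases qc) auto
        obtain h where h: "(h, C, m, vc) \<in> votes s" "(h, B', r + 1, 0) \<in> votes s"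
          using quorum_inter[OF FF cF qc_nongen(1) hv] vqc qcd CG by blast
        obtain qC tco x where Cd: "C = Block qC tco m 0 x" and vbC: "valid_block f F s C"
          and qCm: "qc_r qC < m" and vcd: "vcond m qC tco"
          using votes_vrec[OF h(1)] unfolding vrec_def by blast
        show ?thesis
        proof (cases "m = r + 1")
          case True
          then have "C = B'" using votes_uniq h by blast
          then show ?thesis using ext_step[OF ext_refl B' c0] by simp
        next
          case False
          then have mr2: "r + 1 < m" using mr by simp
          have rq: "r \<le> qc_r qC"
            using vcd unfolding vcond_def
          proof
            assume "m = qc_r qC + 1" then show ?thesis using mr2 by simp
          next
            assume "\<exists>t. tco = Some t \<and> m = tc_r t + 1 \<and> Max (set (map (qc_r \<circ> snd) (tc_qcs t))) \<le> qc_r qC"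
            then obtain tr l where t: "tco = Some (TC tr l)" "m = tr + 1"
              and mx: "Max (set (map (qc_r \<circ> snd) l)) \<le> qc_r qC"
              by (metis tc_qcs.simps tc_r.simps tc.exhaust)
            have vt: "valid_tc f F s (TC tr l)" using vbC Cd t(1) by (simp add: valid_block_def)
            then have len: "length l = 2 * f + 1" and dl: "distinct (map fst l)"
              and el: "\<And>j q. (j, q) \<in> set l \<Longrightarrow> j < nrep f \<and> (j \<in> F \<or> (j, tr, q) \<in> touts s)"
              by (auto simp: valid_tc_def)
            let ?S = "{j. j < nrep f \<and> (j \<in> F \<or> (\<exists>q. (j, q) \<in> set l \<and> (j, tr, q) \<in> touts s))}"
            have "set (map fst l) \<subseteq> ?S" using el by fastforce
            then have "card (set (map fst l)) \<le> card ?S" by (intro card_mono) auto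
            moreover have "card (set (map fst l)) = 2 * f + 1" using distinct_card[OF dl] len by simp
            ultimately have cS: "2 * f + 1 \<le> card ?S" by simp
            obtain h' q' where h': "(h', q') \<in> set l" "(h', tr, q') \<in> touts s" "(h', B', r + 1, 0) \<in> votes s"
              using quorum_inter[OF FF cF cS hv] by blast
            have "qc_r q0 \<le> qc_r q'" using votes_touts[OF h'(3) B' h'(2)] t(2) mr2 by simp
            moreover have "qc_r q' \<le> Max (set (map (qc_r \<circ> snd) l))"
              using h'(1) by (intro Max_ge) force+
            ultimately show ?thesis using mx q0r by simp
          qed
          have vqC: "valid_qc f F s qC" using vbC Cd by (simp add: valid_block_def)
          have Pr: "bround (qc_blk qC) = qc_r qC" using valid_qc_round[OF vqC] by simp
          have cP: "certifies f F s qC (qc_blk qC)" using vqC unfolding certifies_def by simp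
          have "extends f F s B (qc_blk qC)"
            using less.IH[of "qc_r qC"] qCm rq Pr cP by blast
          then show ?thesis using ext_step[OF _ Cd cP] by simp
        qed
      qed
    qed
  qed
  then show "certifies f F s qc C \<Longrightarrow> bround B \<le> bround C \<Longrightarrow> extends f F s B C"
    unfolding r_def by blast
qed

end


theorem theorem2:
  fixes f :: nat and F :: "nat set" and s :: "'tx gst" and B B' :: "'tx block"
  assumes "F \<subseteq> {..<nrep f}" and "card F \<le> f"
    and "reachable f F s"
    and "globally_direct_committed f F s B"
    and "globally_direct_committed f F s B'"
  shows "extends f F s B B' \<or> extends f F s B' B"
proof -
  have J: "jinv f F s" using reachable_jinv[OF assms(3)] .
  obtain q1 where c1: "certifies f F s q1 B"
    using assms(4) unfolding globally_direct_committed_def by blast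
  obtain q2 where c2: "certifies f F s q2 B'"
    using assms(5) unfolding globally_direct_committed_def by blast
  show ?thesis
  proof (cases "bround B \<le> bround B'")
    case True
    then show ?thesis using main_ext[OF assms(1,2) J assms(4) c2] by blast
  next
    case False
    then show ?thesis using main_ext[OF assms(1,2) J assms(5) c1] by simp
  qed
qed

end
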